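(* Let $K_t(\omega)$ be a weighted complete graph on $[t]$. Suppose $K_t(\omega)$ contains $p$ copies of $C_5$, $q$ copies of $K_4$, $r$ copies of $K_3$ and $s$ single edges, such that all these $p+q+r+s$ subgraphs are pairwise vertex-disjoint and each of them is half (every edge of each of these subgraphs has weight $\frac12$). Then $$2g(K_t(\omega))\le 1-\frac{30}{30t-75p-72q-45r-20s}.$$
   Context: A weighted complete graph $K_t(\omega)$ is the complete graph on vertex set $[t]$ in which every edge $ij$ has a weight $\omega(i,j)\in\{\frac12,1\}$; an edge is called half if its weight is $\frac12$ and full if its weight is $1$, and a subgraph is half if all its edges are half. Its edge density is $g(K_t(\omega))=\max_{\mathbf u}\sum_{1\le i<j\le t}\omega(i,j)u_iu_j$, the maximum taken over all $\mathbf u=(u_1,\dots,u_t)$ with $u_i\ge 0$ and $\sum_i u_i=1$. *)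

theory Defs
  imports Complex_Main
begin

definition weighted_complete_graph :: "nat \<Rightarrow> (nat \<Rightarrow> nat \<Rightarrow> real) \<Rightarrow> bool" where
  "weighted_complete_graph t \<omega> \<longleftrightarrow>
     (\<forall>i\<in>{1..t}. \<forall>j\<in>{1..t}. i \<noteq> j \<longrightarrow> \<omega> i j = \<omega> j i \<and> \<omega> i j \<in> {1/2, 1})"

definition simplex :: "nat \<Rightarrow> (nat \<Rightarrow> real) set" where
  "simplex t = {u. (\<forall>i\<in>{1..t}. 0 \<le> u i) \<and> (\<Sum>i=1..t. u i) = 1}"

text \<open>Edge density g(K_t(omega)) = max over the simplex of sum_{i<j} omega(i,j) u_i u_j
  (the maximum is attained by compactness, so it equals the supremum).\<close>
definition edge_density :: "nat \<Rightarrow> (nat \<Rightarrow> nat \<Rightarrow> real) \<Rightarrow> real" where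
  "edge_density t \<omega> =
     Sup ((\<lambda>u. \<Sum>i=1..t. \<Sum>j=i+1..t. \<omega> i j * u i * u j) ` simplex t)"

definition half_C5 :: "nat \<Rightarrow> (nat \<Rightarrow> nat \<Rightarrow> real) \<Rightarrow> (nat \<Rightarrow> nat) \<Rightarrow> bool" where
  "half_C5 t \<omega> c \<longleftrightarrow> inj_on c {0..<5} \<and> c ` {0..<5} \<subseteq> {1..t} \<and>
     (\<forall>j<5. \<omega> (c j) (c ((j + 1) mod 5)) = 1/2)"

definition half_clique :: "nat \<Rightarrow> (nat \<Rightarrow> nat \<Rightarrow> real) \<Rightarrow> nat \<Rightarrow> nat set \<Rightarrow> bool" where
  "half_clique t \<omega> k A \<longleftrightarrow> A \<subseteq> {1..t} \<and> card A = k \<and>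
     (\<forall>i\<in>A. \<forall>j\<in>A. i \<noteq> j \<longrightarrow> \<omega> i j = 1/2)"

end

theory Submission imports Defs begin

lemma cs_sum:
  fixes x :: "nat \<Rightarrow> real"
  assumes "finite A"
  shows "(\<Sum>i\<in>A. x i)^2 \<le> real (card A) * (\<Sum>i\<in>A. (x i)^2)"
proof -
  define m where "m = (\<Sum>i\<in>A. x i)"
  define k where "k = real (card A)"
  have "0 \<le> (\<Sum>i\<in>A. (k * x i - m)^2)" by (simp add: sum_nonneg)
  also have "\<dots> = (\<Sum>i\<in>A. k^2 * (x i)^2 - 2*k*m * x i + m^2)"
    by (rule sum.cong) (auto simp: power2_eq_square algebra_simps)
  also have "\<dots> = k^2 * (\<Sum>i\<in>A. (x i)^2) - 2*k*m*m + k * m^2"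
    by (simp add: sum.distrib sum_subtractf sum_distrib_left[symmetric] m_def k_def)
  also have "\<dots> = k * (k * (\<Sum>i\<in>A. (x i)^2) - m^2)"
    by (simp add: power2_eq_square algebra_simps)
  finally have h: "0 \<le> k * (k * (\<Sum>i\<in>A. (x i)^2) - m^2)" .
  show ?thesis
  proof (cases "A = {}")
    case True thus ?thesis by simp
  next
    case False
    then have "k > 0" using assms by (simp add: k_def card_gt_0_iff)
    with h have "0 \<le> k * (\<Sum>i\<in>A. (x i)^2) - m^2"
      by (simp add: zero_le_mult_iff)
    thus ?thesis by (simp add: m_def k_def)
  qed
qed

lemma sum_split_add:
  fixes f :: "nat \<Rightarrow> real"
  shows "(\<Sum>m<a+b. f m) = (\<Sum>m<a. f m) + (\<Sum>m<b. f (a+m))"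
  by (induction b) (simp_all add: add.commute add.left_commute)

lemma sum_split_add_nat:
  fixes f :: "nat \<Rightarrow> nat"
  shows "(\<Sum>m<a+b. f m) = (\<Sum>m<a. f m) + (\<Sum>m<b. f (a+m))"
  by (induction b) (simp_all add: add.commute add.left_commute)

definition TT :: "nat \<Rightarrow> (nat \<Rightarrow> nat \<Rightarrow> real) \<Rightarrow> (nat \<Rightarrow> real) \<Rightarrow> nat \<Rightarrow> real" where
  "TT t \<omega> u i = (u i)^2 + (1/2) * (\<Sum>j\<in>{1..t}-{i}. (2 - 2 * \<omega> i j) * u i * u j)"

lemma TT_ge:
  assumes wg: "weighted_complete_graph t \<omega>" and u: "\<forall>i\<in>{1..t}. 0 \<le> u i"
    and i: "i \<in> {1..t}" and J: "J \<subseteq> {1..t} - {i}"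
  shows "(u i)^2 + (1/2) * (\<Sum>j\<in>J. (2 - 2 * \<omega> i j) * u i * u j) \<le> TT t \<omega> u i"
proof -
  have "(\<Sum>j\<in>J. (2 - 2 * \<omega> i j) * u i * u j) \<le> (\<Sum>j\<in>{1..t}-{i}. (2 - 2 * \<omega> i j) * u i * u j)"
  proof (rule sum_mono2)
    fix j assume j: "j \<in> {1..t} - {i} - J"
    have "\<omega> i j \<in> {1/2, 1}" using wg i j unfolding weighted_complete_graph_def by auto
    hence "0 \<le> 2 - 2 * \<omega> i j" by auto
    thus "0 \<le> (2 - 2 * \<omega> i j) * u i * u j" using u i j by auto
  qed (use J in auto)
  thus ?thesis unfolding TT_def by simp
qed


lemma clique_real:
  fixes K S2 m l :: real
  assumes "K > 0" "m^2 \<le> K * S2"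
  shows "2*l*m - l^2 * (2*K/(K+1)) \<le> S2/2 + m^2/2"
proof -
  have "0 \<le> (m*(K+1) - 2*K*l)^2" by simp
  hence a: "4*l*m*K*(K+1) - 4*K*K*l*l \<le> m*m*(K+1)*(K+1)"
    by (simp add: power2_eq_square algebra_simps)
  have "m*m*(K+1) \<le> K*S2*(K+1)" using assms by (simp add: power2_eq_square mult_right_mono)
  hence b: "m*m*(K+1)*(K+1) \<le> K*(K+1)*(S2+m*m)" by (simp add: algebra_simps)
  have e1: "(2*l*m - l^2 * (2*K/(K+1))) * (2*K*(K+1)) = 4*l*m*K*(K+1) - 4*K*K*l*l"
    using assms by (simp add: field_simps power2_eq_square)
  have e2: "(S2/2 + m^2/2) * (2*K*(K+1)) = K*(K+1)*(S2+m*m)"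
    by (simp add: field_simps power2_eq_square)
  have "(2*l*m - l^2 * (2*K/(K+1))) * (2*K*(K+1)) \<le> (S2/2 + m^2/2) * (2*K*(K+1))"
    using a b e1 e2 by linarith
  moreover have "2*K*(K+1) > 0" using assms by simp
  ultimately show ?thesis by (simp add: mult_le_cancel_right)
qed

lemma clique_block:
  assumes wg: "weighted_complete_graph t \<omega>" and u: "\<forall>i\<in>{1..t}. 0 \<le> u i"
    and A: "A \<subseteq> {1..t}" "card A = k" "k \<ge> 1"
    and half: "\<forall>i\<in>A. \<forall>j\<in>A. i \<noteq> j \<longrightarrow> \<omega> i j = 1/2"
  shows "2*l*(\<Sum>i\<in>A. u i) - l^2 * (2*real k/(real k+1)) \<le> (\<Sum>i\<in>A. TT t \<omega> u i)"
proof -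
  have fin: "finite A" using A by (meson finite_atLeastAtMost finite_subset)
  define m where "m = (\<Sum>i\<in>A. u i)"
  have "(\<Sum>i\<in>A. (u i)^2 + (1/2) * (u i * m - (u i)^2)) \<le> (\<Sum>i\<in>A. TT t \<omega> u i)"
  proof (rule sum_mono)
    fix i assume i: "i \<in> A"
    have "(\<Sum>j\<in>A-{i}. (2 - 2 * \<omega> i j) * u i * u j) = (\<Sum>j\<in>A-{i}. u i * u j)"
    proof (rule sum.cong[OF refl])
      fix j assume "j \<in> A-{i}"
      hence "\<omega> i j = 1/2" using half i by auto
      thus "(2 - 2 * \<omega> i j) * u i * u j = u i * u j" by simp
    qed
    also have "\<dots> = u i * m - u i * u i"
      using fin i by (simp add: sum_distrib_left m_def sum_diff1 mult.commute)
    finally have e: "(\<Sum>j\<in>A-{i}. (2 - 2 * \<omega> i j) * u i * u j) = u i * m - (u i)^2"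
      by (simp add: power2_eq_square)
    have "(u i)^2 + (1/2) * (\<Sum>j\<in>A-{i}. (2 - 2 * \<omega> i j) * u i * u j) \<le> TT t \<omega> u i"
      using TT_ge[OF wg u, of i "A-{i}"] A i by blast
    thus "(u i)^2 + (1/2) * (u i * m - (u i)^2) \<le> TT t \<omega> u i" using e by simp
  qed
  moreover have "(\<Sum>i\<in>A. (u i)^2 + (1/2) * (u i * m - (u i)^2)) = (\<Sum>i\<in>A. (u i)^2)/2 + m^2/2"
  proof -
    have "(\<Sum>i\<in>A. (u i)^2 + (1/2) * (u i * m - (u i)^2)) = (\<Sum>i\<in>A. (u i)^2/2 + (m/2) * u i)"
      by (rule sum.cong) (auto simp: algebra_simps)
    also have "\<dots> = (\<Sum>i\<in>A. (u i)^2)/2 + (m/2) * m"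
      by (simp add: sum.distrib sum_distrib_left[symmetric] sum_divide_distrib[symmetric] m_def)
    finally show ?thesis by (simp add: power2_eq_square)
  qed
  moreover have "2*l*m - l^2 * (2*real k/(real k+1)) \<le> (\<Sum>i\<in>A. (u i)^2)/2 + m^2/2"
    using clique_real[of "real k" m "\<Sum>i\<in>A. (u i)^2" l] cs_sum[OF fin, of u] A
    by (simp add: m_def)
  ultimately show ?thesis by (simp add: m_def)
qed


lemma c5_real:
  fixes y0 y1 y2 y3 y4 l :: real
  shows "2*l*(y0+y1+y2+y3+y4) - l^2*(5/2) \<le>
    (y0^2 + (1/2)*(y0*y1 + y0*y4)) + (y1^2 + (1/2)*(y1*y2 + y1*y0)) + (y2^2 + (1/2)*(y2*y3 + y2*y1))
    + (y3^2 + (1/2)*(y3*y4 + y3*y2)) + (y4^2 + (1/2)*(y4*y0 + y4*y3))"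
proof -
  have "0 \<le> (1/2)*((y0+y1-l)^2 + (y1+y2-l)^2 + (y2+y3-l)^2 + (y3+y4-l)^2 + (y4+y0-l)^2)"
    by simp
  thus ?thesis by (simp add: power2_eq_square algebra_simps)
qed

lemma c5_block:
  assumes wg: "weighted_complete_graph t \<omega>" and u: "\<forall>i\<in>{1..t}. 0 \<le> u i"
    and c: "half_C5 t \<omega> c"
  shows "2*l*(\<Sum>i\<in>c`{0..<5}. u i) - l^2 * (5/2) \<le> (\<Sum>i\<in>c`{0..<5}. TT t \<omega> u i)"
proof -
  have inj: "inj_on c {0..<5}" and sub: "c ` {0..<5} \<subseteq> {1..t}"
    and hf: "\<forall>j<5. \<omega> (c j) (c ((j + 1) mod 5)) = 1/2" using c unfolding half_C5_def by auto
  define y where "y a = u (c a)" for a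
  have key: "(y a)^2 + (1/2)*(y a * y ((a+1) mod 5) + y a * y ((a+4) mod 5)) \<le> TT t \<omega> u (c a)"
    if a: "a < 5" for a
  proof -
    define b where "b = (a+1) mod 5"
    define d where "d = (a+4) mod 5"
    let ?b = b and ?d = d
    have ab: "c ?b \<noteq> c a" "c ?d \<noteq> c a" "c ?b \<noteq> c ?d"
    proof -
      have n: "?b \<noteq> a" "?d \<noteq> a" "?b \<noteq> ?d" using a unfolding b_def d_def by presburger+
      have m: "?b \<in> {0..<5}" "?d \<in> {0..<5}" "a \<in> {0..<5}" using a unfolding b_def d_def by auto
      show "c ?b \<noteq> c a" "c ?d \<noteq> c a" "c ?b \<noteq> c ?d"
        using inj_on_contraD[OF inj] n m by blast+
    qed
    have ca: "c a \<in> {1..t}" "c ?b \<in> {1..t}" "c ?d \<in> {1..t}"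
      using sub a unfolding b_def d_def by (auto simp del: atLeastAtMost_iff intro!: imageI)
    have w1: "\<omega> (c a) (c ?b) = 1/2" using hf a unfolding b_def by auto
    have "(d + 1) mod 5 = a" "d < 5" using a unfolding d_def by presburger+
    hence "\<omega> (c ?d) (c a) = 1/2" using hf[rule_format, of ?d] by simp
    hence w2: "\<omega> (c a) (c ?d) = 1/2" using wg ca ab unfolding weighted_complete_graph_def by metis
    have "(u (c a))^2 + (1/2) * (\<Sum>j\<in>{c ?b, c ?d}. (2 - 2 * \<omega> (c a) j) * u (c a) * u j) \<le> TT t \<omega> u (c a)"
    proof (rule TT_ge[OF wg u ca(1)])
      show "{c ?b, c ?d} \<subseteq> {1..t} - {c a}" using ab ca(2,3) by (simp del: atLeastAtMost_iff)
    qed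
    moreover have "(\<Sum>j\<in>{c ?b, c ?d}. (2 - 2 * \<omega> (c a) j) * u (c a) * u j) = u (c a) * u (c b) + u (c a) * u (c d)"
      using ab(3) by (subst sum.insert) (auto simp: w1 w2 simp del: mult_eq_1_iff)
    ultimately show ?thesis by (simp add: y_def b_def d_def)
  qed
  have r1: "(\<Sum>i\<in>c`{0..<5}. TT t \<omega> u i) = (\<Sum>a\<in>{0..<5}. TT t \<omega> u (c a))"
    using sum.reindex[OF inj] by simp
  have r2: "(\<Sum>i\<in>c`{0..<5}. u i) = (\<Sum>a\<in>{0..<5}. y a)"
    using sum.reindex[OF inj] by (simp add: y_def)
  define G where "G a = (y a)^2 + (1/2)*(y a * y ((a+1) mod 5) + y a * y ((a+4) mod 5))" for a
  have s5: "(\<Sum>a\<in>{0..<5::nat}. F a) = F 0 + F 1 + F 2 + F 3 + F 4" for F :: "nat \<Rightarrow> real"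
    by (simp add: atLeast0LessThan lessThan_nat_numeral)
  have "(\<Sum>a\<in>{0..<5}. G a) \<le> (\<Sum>a\<in>{0..<5}. TT t \<omega> u (c a))"
    by (rule sum_mono) (use key in \<open>auto simp: G_def\<close>)
  moreover have "G 0 = (y 0)^2 + (1/2)*(y 0 * y 1 + y 0 * y 4)" by (simp add: G_def)
  moreover have "G 1 = (y 1)^2 + (1/2)*(y 1 * y 2 + y 1 * y 0)" by (simp add: G_def numeral_2_eq_2)
  moreover have "G 2 = (y 2)^2 + (1/2)*(y 2 * y 3 + y 2 * y 1)" by (simp add: G_def)
  moreover have "G 3 = (y 3)^2 + (1/2)*(y 3 * y 4 + y 3 * y 2)" by (simp add: G_def)
  moreover have "G 4 = (y 4)^2 + (1/2)*(y 4 * y 0 + y 4 * y 3)" by (simp add: G_def)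
  moreover have "2*l*(\<Sum>i\<in>c`{0..<5}. u i) = 2*l*(y 0 + y 1 + y 2 + y 3 + y 4)"
    by (simp only: r2 s5)
  ultimately show ?thesis using r1 r2 c5_real[of l "y 0" "y 1" "y 2" "y 3" "y 4"] s5[of G] s5[of y]
    s5[of "\<lambda>a. TT t \<omega> u (c a)"]
    by linarith
qed


lemma sym_sum:
  fixes F :: "nat \<Rightarrow> nat \<Rightarrow> real"
  assumes sym: "\<forall>i\<in>{1..t}. \<forall>j\<in>{1..t}. F i j = F j i"
  shows "2 * (\<Sum>i=1..t. \<Sum>j=i+1..t. F i j) = (\<Sum>i\<in>{1..t}. \<Sum>j\<in>{1..t}-{i}. F i j)"
proof -
  let ?I = "{1..t}"
  have e1: "(\<Sum>j\<in>?I-{i}. F i j) = (\<Sum>j\<in>?I. if i < j then F i j else 0) + (\<Sum>j\<in>?I. if j < i then F i j else 0)" for i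
  proof -
    have "(\<Sum>j\<in>?I-{i}. F i j) = (\<Sum>j\<in>?I. if i < j then F i j else 0 + (if j < i then F i j else 0))"
      by (subst sum.mono_neutral_cong_right[of ?I "?I-{i}"]) auto
    also have "\<dots> = (\<Sum>j\<in>?I. (if i < j then F i j else 0) + (if j < i then F i j else 0))"
      by (rule sum.cong) auto
    finally show ?thesis by (simp add: sum.distrib)
  qed
  have e2: "(\<Sum>j=i+1..t. F i j) = (\<Sum>j\<in>?I. if i < j then F i j else 0)" if "i \<in> ?I" for i
  proof -
    have "{i+1..t} = {j\<in>?I. i < j}" using that by auto
    hence "(\<Sum>j=i+1..t. F i j) = (\<Sum>j\<in>{j\<in>?I. i < j}. F i j)" by simp
    also have "\<dots> = (\<Sum>j\<in>?I. if i < j then F i j else 0)" by (rule sum.inter_filter) simp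
    finally show ?thesis .
  qed
  have e3: "(\<Sum>i\<in>?I. \<Sum>j\<in>?I. if j < i then F i j else 0) = (\<Sum>i\<in>?I. \<Sum>j\<in>?I. if i < j then F i j else 0)"
  proof -
    have "(\<Sum>i\<in>?I. \<Sum>j\<in>?I. if j < i then F i j else 0) = (\<Sum>j\<in>?I. \<Sum>i\<in>?I. if j < i then F i j else 0)"
      by (rule sum.swap)
    also have "\<dots> = (\<Sum>j\<in>?I. \<Sum>i\<in>?I. if j < i then F j i else 0)"
      using sym by (intro sum.cong refl) auto
    finally show ?thesis .
  qed
  have "(\<Sum>i\<in>?I. \<Sum>j\<in>?I-{i}. F i j) = (\<Sum>i\<in>?I. \<Sum>j\<in>?I. if i < j then F i j else 0) + (\<Sum>i\<in>?I. \<Sum>j\<in>?I. if j < i then F i j else 0)"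
    by (simp only: e1 sum.distrib)
  also have "\<dots> = 2 * (\<Sum>i\<in>?I. \<Sum>j\<in>?I. if i < j then F i j else 0)" using e3 by simp
  also have "\<dots> = 2 * (\<Sum>i=1..t. \<Sum>j=i+1..t. F i j)" using e2 by simp
  finally show ?thesis by simp
qed

lemma row_eq:
  assumes i: "i \<in> {1..t}" and su: "(\<Sum>i=1..t. u i) = 1"
  shows "(\<Sum>j\<in>{1..t}-{i}. \<omega> i j * u i * u j) = u i - TT t \<omega> u i"
proof -
  have a: "(\<Sum>j\<in>{1..t}-{i}. u i * u j) = u i * (1 - u i)"
    using i su by (simp add: sum_distrib_left[symmetric] sum_diff1)
  have "TT t \<omega> u i = (u i)^2 + (\<Sum>j\<in>{1..t}-{i}. u i * u j) - (\<Sum>j\<in>{1..t}-{i}. \<omega> i j * u i * u j)"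
  proof -
    have "(\<Sum>j\<in>{1..t}-{i}. (2 - 2 * \<omega> i j) * u i * u j) = (\<Sum>j\<in>{1..t}-{i}. 2 * (u i * u j) - 2 * (\<omega> i j * u i * u j))"
      by (rule sum.cong) (auto simp: algebra_simps)
    also have "\<dots> = 2 * (\<Sum>j\<in>{1..t}-{i}. u i * u j) - 2 * (\<Sum>j\<in>{1..t}-{i}. \<omega> i j * u i * u j)"
      by (simp add: sum_subtractf sum_distrib_left)
    finally show ?thesis unfolding TT_def by simp
  qed
  thus ?thesis using a by (simp add: power2_eq_square algebra_simps)
qed


theorem mainTheorem6:
  fixes t p q r s :: nat
    and \<omega> :: "nat \<Rightarrow> nat \<Rightarrow> real"
    and C :: "nat \<Rightarrow> nat \<Rightarrow> nat"
    and Q R S :: "nat \<Rightarrow> nat set"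
  assumes "t \<ge> 1"
    and "weighted_complete_graph t \<omega>"
    and "\<forall>i<p. half_C5 t \<omega> (C i)"
    and "\<forall>i<q. half_clique t \<omega> 4 (Q i)"
    and "\<forall>i<r. half_clique t \<omega> 3 (R i)"
    and "\<forall>i<s. half_clique t \<omega> 2 (S i)"
    and "\<forall>k < p+q+r+s. \<forall>l < p+q+r+s. k \<noteq> l \<longrightarrow>
           (let V = (\<lambda>m. if m < p then C m ` {0..<5}
                         else if m < p+q then Q (m-p)
                         else if m < p+q+r then R (m-p-q)
                         else S (m-p-q-r))
            in V k \<inter> V l = {})"
  shows "2 * edge_density t \<omega> \<le>
           1 - 30 / (30 * real t - 75 * real p - 72 * real q - 45 * real r - 20 * real s)"
proof -
  note wg = assms(2)
  let ?I = "{1..t}"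
  define N where "N = p+q+r+s"
  define V where "V = (\<lambda>m. if m < p then C m ` {0..<5}
                         else if m < p+q then Q (m-p)
                         else if m < p+q+r then R (m-p-q)
                         else S (m-p-q-r))"
  define kc :: "nat \<Rightarrow> nat" where "kc m = (if m < p then 5 else if m < p+q then 4 else if m < p+q+r then 3 else 2)" for m
  define \<alpha> :: "nat \<Rightarrow> real" where "\<alpha> m = (if m < p then 5/2 else if m < p+q then 8/5 else if m < p+q+r then 3/2 else 4/3)" for m
  have disj: "\<forall>k\<in>{..<N}. \<forall>l\<in>{..<N}. k \<noteq> l \<longrightarrow> V k \<inter> V l = {}"
    using assms(7) unfolding V_def N_def Let_def by auto
  have Vsub: "V m \<subseteq> ?I" and Vcard: "card (V m) = kc m" if "m < N" for m
  proof -
    have "(V m \<subseteq> ?I) \<and> card (V m) = kc m"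
    proof (cases "m < p")
      case True
      hence "half_C5 t \<omega> (C m)" using assms(3) by auto
      thus ?thesis using True unfolding V_def kc_def half_C5_def by (simp add: card_image)
    next
      case f1: False
      show ?thesis
      proof (cases "m < p+q")
        case True
        hence "half_clique t \<omega> 4 (Q (m-p))" using assms(4) f1 by auto
        thus ?thesis using True f1 unfolding V_def kc_def half_clique_def by simp
      next
        case f2: False
        show ?thesis
        proof (cases "m < p+q+r")
          case True
          hence "half_clique t \<omega> 3 (R (m-p-q))" using assms(5) f1 f2 by auto
          thus ?thesis using True f1 f2 unfolding V_def kc_def half_clique_def by simp
        next
          case f3: False
          hence "half_clique t \<omega> 2 (S (m-p-q-r))" using assms(6) f1 f2 that unfolding N_def by auto
          thus ?thesis using f3 f1 f2 unfolding V_def kc_def half_clique_def by simp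
        qed
      qed
    qed
    thus "V m \<subseteq> ?I" "card (V m) = kc m" by auto
  qed
  have Vfin: "finite (V m)" if "m < N" for m
    using Vsub[OF that] by (meson finite_atLeastAtMost finite_subset)
  have block: "2*l*(\<Sum>i\<in>V m. u i) - l^2 * \<alpha> m \<le> (\<Sum>i\<in>V m. TT t \<omega> u i)"
    if "m < N" and u: "\<forall>i\<in>?I. 0 \<le> u i" for m l u
  proof (cases "m < p")
    case True
    hence "half_C5 t \<omega> (C m)" using assms(3) by auto
    thus ?thesis using True c5_block[OF wg u] unfolding V_def \<alpha>_def by simp
  next
    case f1: False
    show ?thesis
    proof (cases "m < p+q")
      case True
      hence "half_clique t \<omega> 4 (Q (m-p))" using assms(4) f1 by auto
      thus ?thesis using True f1 clique_block[OF wg u, of "Q (m-p)" 4 l] unfolding V_def \<alpha>_def half_clique_def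
        by simp
    next
      case f2: False
      show ?thesis
      proof (cases "m < p+q+r")
        case True
        hence "half_clique t \<omega> 3 (R (m-p-q))" using assms(5) f1 f2 by auto
        thus ?thesis using True f1 f2 clique_block[OF wg u, of "R (m-p-q)" 3 l] unfolding V_def \<alpha>_def half_clique_def
          by simp
      next
        case f3: False
        hence "half_clique t \<omega> 2 (S (m-p-q-r))" using assms(6) f1 f2 that unfolding N_def by auto
        thus ?thesis using f3 f1 f2 clique_block[OF wg u, of "S (m-p-q-r)" 2 l] unfolding V_def \<alpha>_def half_clique_def
          by simp
      qed
    qed
  qed
  define W where "W = (\<Union>m\<in>{..<N}. V m)"
  define U where "U = ?I - W"
  have Wsub: "W \<subseteq> ?I" using Vsub unfolding W_def by auto
  have finW: "finite W" using Wsub by (meson finite_atLeastAtMost finite_subset)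
  have sumsplit: "(\<Sum>i\<in>?I. f i) = (\<Sum>m<N. \<Sum>i\<in>V m. f i) + (\<Sum>i\<in>U. f i)" for f :: "nat \<Rightarrow> real"
  proof -
    have "(\<Sum>i\<in>?I. f i) = (\<Sum>i\<in>U. f i) + (\<Sum>i\<in>W. f i)"
      unfolding U_def by (rule sum.subset_diff[OF Wsub]) simp
    moreover have "(\<Sum>i\<in>W. f i) = (\<Sum>m<N. \<Sum>i\<in>V m. f i)"
      unfolding W_def by (rule sum.UNION_disjoint) (use Vfin disj in auto)
    ultimately show ?thesis by simp
  qed
  have cardW: "card W = (\<Sum>m<N. kc m)"
  proof -
    have "card W = (\<Sum>m<N. card (V m))"
      unfolding W_def by (rule card_UN_disjoint) (use Vfin disj in auto)
    thus ?thesis using Vcard by simp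
  qed
  have cardU: "real (card U) = real t - real (card W)"
    unfolding U_def using card_Diff_subset[OF finW Wsub] card_mono[OF _ Wsub] by simp
  have skc: "(\<Sum>m<N. kc m) = 5*p + 4*q + 3*r + 2*s"
    unfolding N_def by (simp add: sum_split_add_nat kc_def)
  have sal: "(\<Sum>m<N. \<alpha> m) = 5/2*p + 8/5*q + 3/2*r + 4/3*s"
    unfolding N_def by (simp add: sum_split_add \<alpha>_def)
  define D' where "D' = real t - 5/2*p - 12/5*q - 3/2*r - 2/3*s"
  have Dsum: "(\<Sum>m<N. \<alpha> m) + real (card U) = D'"
    using cardU cardW skc sal unfolding D'_def by simp
  have tge: "real t \<ge> 5*p + 4*q + 3*r + 2*s"
  proof -
    have "card W \<le> t" using card_mono[OF _ Wsub] by simp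
    hence "5*p + 4*q + 3*r + 2*s \<le> t" using cardW skc by simp
    hence "real (5*p + 4*q + 3*r + 2*s) \<le> real t" by (simp only: of_nat_le_iff)
    thus ?thesis by simp
  qed
  have Dpos: "D' > 0"
  proof (cases "p+q+r+s = 0")
    case True thus ?thesis using assms(1) unfolding D'_def by simp
  next
    case False thus ?thesis using tge unfolding D'_def by linarith
  qed
  have Dfin: "30 * real t - 75 * real p - 72 * real q - 45 * real r - 20 * real s = 30 * D'"
    unfolding D'_def by simp
  have key: "2 * (\<Sum>i=1..t. \<Sum>j=i+1..t. \<omega> i j * u i * u j) \<le> 1 - 1/D'" if u: "u \<in> simplex t" for u
  proof -
    have u0: "\<forall>i\<in>?I. 0 \<le> u i" and su: "(\<Sum>i=1..t. u i) = 1" using u unfolding simplex_def by auto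
    have symF: "\<forall>i\<in>?I. \<forall>j\<in>?I. \<omega> i j * u i * u j = \<omega> j i * u j * u i"
    proof (intro ballI)
      fix i j assume ij: "i \<in> ?I" "j \<in> ?I"
      show "\<omega> i j * u i * u j = \<omega> j i * u j * u i"
      proof (cases "i = j")
        case True thus ?thesis by simp
      next
        case False
        hence "\<omega> i j = \<omega> j i" using wg ij unfolding weighted_complete_graph_def by blast
        thus ?thesis by (simp add: mult.commute mult.left_commute)
      qed
    qed
    have "2 * (\<Sum>i=1..t. \<Sum>j=i+1..t. \<omega> i j * u i * u j) = (\<Sum>i\<in>?I. \<Sum>j\<in>?I-{i}. \<omega> i j * u i * u j)"
      by (rule sym_sum[OF symF])
    also have "\<dots> = (\<Sum>i\<in>?I. u i - TT t \<omega> u i)"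
      using row_eq[OF _ su] by simp
    also have "\<dots> = 1 - (\<Sum>i\<in>?I. TT t \<omega> u i)" using su by (simp add: sum_subtractf)
    finally have e: "2 * (\<Sum>i=1..t. \<Sum>j=i+1..t. \<omega> i j * u i * u j) = 1 - (\<Sum>i\<in>?I. TT t \<omega> u i)" .
    define l where "l = 1/D'"
    have b1: "(\<Sum>m<N. 2*l*(\<Sum>i\<in>V m. u i) - l^2 * \<alpha> m) \<le> (\<Sum>m<N. \<Sum>i\<in>V m. TT t \<omega> u i)"
      by (rule sum_mono) (use block u0 in auto)
    have b2: "(\<Sum>i\<in>U. 2*l*u i - l^2) \<le> (\<Sum>i\<in>U. TT t \<omega> u i)"
    proof (rule sum_mono)
      fix i assume "i \<in> U"
      hence iI: "i \<in> ?I" unfolding U_def by auto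
      have "(u i)^2 + (1/2) * (\<Sum>j\<in>{}. (2 - 2 * \<omega> i j) * u i * u j) \<le> TT t \<omega> u i"
        by (rule TT_ge[OF wg u0 iI]) simp
      moreover have "2*l*u i - l^2 \<le> (u i)^2" using sum_squares_ge_zero[of "u i - l" 0]
        by (simp add: power2_eq_square algebra_simps)
      ultimately show "2*l*u i - l^2 \<le> TT t \<omega> u i" by simp
    qed
    have one_sum: "(\<Sum>m<N. \<Sum>i\<in>V m. u i) + (\<Sum>i\<in>U. u i) = 1" using sumsplit[of u] su by linarith
    have x1: "(\<Sum>m<N. 2*l*(\<Sum>i\<in>V m. u i) - l^2 * \<alpha> m) = 2*l*(\<Sum>m<N. \<Sum>i\<in>V m. u i) - l^2 * (\<Sum>m<N. \<alpha> m)"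
      by (simp add: sum_subtractf sum_distrib_left)
    have x2: "(\<Sum>i\<in>U. 2*l*u i - l^2) = 2*l*(\<Sum>i\<in>U. u i) - l^2 * real (card U)"
      by (simp add: sum_subtractf sum_distrib_left)
    have "(\<Sum>m<N. 2*l*(\<Sum>i\<in>V m. u i) - l^2 * \<alpha> m) + (\<Sum>i\<in>U. 2*l*u i - l^2)
        = 2*l*((\<Sum>m<N. \<Sum>i\<in>V m. u i) + (\<Sum>i\<in>U. u i)) - l^2 * ((\<Sum>m<N. \<alpha> m) + real (card U))"
      unfolding x1 x2 by (simp add: algebra_simps)
    also have "\<dots> = 2*l - l^2 * D'"
      by (simp only: one_sum Dsum)
    also have "\<dots> = 1/D'" using Dpos unfolding l_def by (simp add: power2_eq_square field_simps)
    finally have "1/D' \<le> (\<Sum>i\<in>?I. TT t \<omega> u i)" using b1 b2 sumsplit[of "TT t \<omega> u"] by linarith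
    thus ?thesis using e by simp
  qed
  have ne: "simplex t \<noteq> {}"
  proof -
    have "(\<lambda>i. if i = 1 then 1 else 0) \<in> simplex t"
      unfolding simplex_def using assms(1) by (simp add: sum.delta)
    thus ?thesis by auto
  qed
  have "edge_density t \<omega> \<le> (1 - 1/D')/2"
    unfolding edge_density_def
  proof (rule cSup_least)
    show "(\<lambda>u. \<Sum>i=1..t. \<Sum>j=i+1..t. \<omega> i j * u i * u j) ` simplex t \<noteq> {}" using ne by simp
  next
    fix x assume "x \<in> (\<lambda>u. \<Sum>i=1..t. \<Sum>j=i+1..t. \<omega> i j * u i * u j) ` simplex t"
    then obtain u where "u \<in> simplex t" "x = (\<Sum>i=1..t. \<Sum>j=i+1..t. \<omega> i j * u i * u j)" by auto
    thus "x \<le> (1 - 1/D')/2" using key by force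
  qed
  moreover have "30 / (30 * D') = 1/D'" using Dpos by simp
  ultimately show ?thesis unfolding Dfin by simp
qed

end
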